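(* Let $D,Q$ be distributions over $[N]$ with $N$ divisible by $6$, let $\varepsilon\in(0,1)$, and define $D'=\frac12D+\frac12U_{[N]}$, $Q'=\frac12Q+\frac12U_{[N]}$, $m=6N$, and $\theta_x=\frac{\lfloor mQ'(x)\rfloor/m}{Q'(x)}$ for $x\in[N]$. Define distributions $D'',Q''$ over $[N+1]$ by $D''(x)=\theta_xD'(x)$, $Q''(x)=\theta_xQ'(x)$ for $x\in[N]$, and $D''(N+1)=1-\sum_{x\in[N]}\theta_xD'(x)$, $Q''(N+1)=1-\sum_{x\in[N]}\theta_xQ'(x)$. Then: $\theta_x\ge 2/3$ for all $x\in[N]$; $Q''$ is $\frac1m$-granular (every probability is an integer multiple of $1/m$) and has full support on $[N]$; $\delta_{TV}(D',Q')=\frac12\delta_{TV}(D,Q)$; if $D=Q$ then $D''=Q''$; and if $\delta_{TV}(D,Q)>\varepsilon$ then $\delta_{TV}(D'',Q'')\ge\varepsilon/3$.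
   Context: $U_{[N]}$ is the uniform distribution over $[N]$; $\delta_{TV}(P,Q)=\frac12\sum_{x}|P(x)-Q(x)|$ denotes total variation distance. *)

theory Defs
  imports Complex_Main
begin

text \<open>A distribution over [N] = {1..N}, represented as a real-valued function on nat
  (values outside {1..N} are irrelevant).\<close>
definition is_dist :: "nat \<Rightarrow> (nat \<Rightarrow> real) \<Rightarrow> bool" where
  "is_dist N P \<longleftrightarrow> (\<forall>x\<in>{1..N}. P x \<ge> 0) \<and> (\<Sum>x=1..N. P x) = 1"

definition tv :: "nat \<Rightarrow> (nat \<Rightarrow> real) \<Rightarrow> (nat \<Rightarrow> real) \<Rightarrow> real" where
  "tv N P Q = (1/2) * (\<Sum>x=1..N. \<bar>P x - Q x\<bar>)"

definition unif :: "nat \<Rightarrow> nat \<Rightarrow> real" where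
  "unif N x = (if x \<in> {1..N} then 1 / real N else 0)"

definition mixU :: "nat \<Rightarrow> (nat \<Rightarrow> real) \<Rightarrow> nat \<Rightarrow> real" where
  "mixU N P x = (if x \<in> {1..N} then P x / 2 + unif N x / 2 else 0)"

definition theta :: "nat \<Rightarrow> (nat \<Rightarrow> real) \<Rightarrow> nat \<Rightarrow> real" where
  "theta N Q' x = (real_of_int \<lfloor>real (6*N) * Q' x\<rfloor> / real (6*N)) / Q' x"

definition rnd :: "nat \<Rightarrow> (nat \<Rightarrow> real) \<Rightarrow> (nat \<Rightarrow> real) \<Rightarrow> nat \<Rightarrow> real" where
  "rnd N Q' P' x =
     (if x \<in> {1..N} then theta N Q' x * P' x
      else if x = N + 1 then 1 - (\<Sum>y=1..N. theta N Q' y * P' y)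
      else 0)"

end

theory Submission
  imports Defs
begin

lemma floor_ratio: fixes a :: real assumes "a \<ge> 3" shows "of_int \<lfloor>a\<rfloor> / a \<ge> 2/3"
proof -
  have "of_int \<lfloor>a\<rfloor> > a - 1" by linarith
  hence "of_int \<lfloor>a\<rfloor> \<ge> 2/3 * a" using assms by linarith
  thus ?thesis using assms by (simp add: field_simps)
qed

theorem mainTheorem5:
  fixes N :: nat and D Q :: "nat \<Rightarrow> real" and \<epsilon> :: real
  assumes "6 dvd N"
    and "is_dist N D" and "is_dist N Q"
    and "0 < \<epsilon>" and "\<epsilon> < 1"
  defines "D' \<equiv> mixU N D" and "Q' \<equiv> mixU N Q" and "m \<equiv> 6 * N"
  defines "D'' \<equiv> rnd N Q' D'" and "Q'' \<equiv> rnd N Q' Q'"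
  shows "(\<forall>x\<in>{1..N}. theta N Q' x \<ge> 2/3)
    \<and> (\<forall>x\<in>{1..N+1}. \<exists>k::nat. Q'' x = real k / real m)
    \<and> (\<forall>x\<in>{1..N}. Q'' x > 0)
    \<and> tv N D' Q' = tv N D Q / 2
    \<and> ((\<forall>x\<in>{1..N}. D x = Q x) \<longrightarrow> (\<forall>x\<in>{1..N+1}. D'' x = Q'' x))
    \<and> (tv N D Q > \<epsilon> \<longrightarrow> tv (N+1) D'' Q'' \<ge> \<epsilon> / 3)"
proof -
  have N1: "N \<ge> 1"
  proof (rule ccontr)
    assume "\<not> N \<ge> 1" hence "N = 0" by simp
    thus False using assms(3) by (simp add: is_dist_def)
  qed
  have Qnn: "\<And>x. x \<in> {1..N} \<Longrightarrow> Q x \<ge> 0" using assms(3) by (simp add: is_dist_def)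
  have Qs: "(\<Sum>x=1..N. Q x) = 1" using assms(3) by (simp add: is_dist_def)
  define a where "a x = real m * Q' x" for x
  have Q'x: "\<And>x. x \<in> {1..N} \<Longrightarrow> Q' x = Q x / 2 + 1 / (2 * real N)"
    by (simp add: Q'_def mixU_def unif_def)
  have ax: "\<And>x. x \<in> {1..N} \<Longrightarrow> a x = 3 * real N * Q x + 3"
    using N1 by (simp add: a_def Q'x m_def field_simps)
  have a3: "\<And>x. x \<in> {1..N} \<Longrightarrow> a x \<ge> 3"
    using ax Qnn N1 by (simp add: mult_nonneg_nonneg)
  have Q'pos: "\<And>x. x \<in> {1..N} \<Longrightarrow> Q' x > 0"
    using Q'x Qnn N1 by (simp add: add_nonneg_pos)
  have mpos: "real m > 0" using N1 m_def by simp
  have th: "\<And>x. x \<in> {1..N} \<Longrightarrow> theta N Q' x = of_int \<lfloor>a x\<rfloor> / a x"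
    by (simp add: theta_def a_def m_def)
  have th23: "\<And>x. x \<in> {1..N} \<Longrightarrow> theta N Q' x \<ge> 2/3"
    using th a3 floor_ratio by simp
  have Q''x: "\<And>x. x \<in> {1..N} \<Longrightarrow> Q'' x = of_int \<lfloor>a x\<rfloor> / real m"
  proof -
    fix x assume x: "x \<in> {1..N}"
    have "Q'' x = theta N Q' x * Q' x" using x by (simp add: Q''_def rnd_def)
    also have "\<dots> = of_int \<lfloor>a x\<rfloor> / real m"
      using Q'pos[OF x] by (simp add: theta_def a_def m_def)
    finally show "Q'' x = of_int \<lfloor>a x\<rfloor> / real m" .
  qed
  have sumfl: "(\<Sum>x=1..N. of_int \<lfloor>a x\<rfloor>) \<le> (\<Sum>x=1..N. a x)"
    by (rule sum_mono) simp
  have suma: "(\<Sum>x=1..N. a x) = real m"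
  proof -
    have "(\<Sum>x=1..N. a x) = (\<Sum>x=1..N. 3 * real N * Q x + 3)" using ax by (rule sum.cong[OF refl])
    also have "\<dots> = 3 * real N * (\<Sum>x=1..N. Q x) + 3 * real N"
      by (simp add: sum.distrib sum_distrib_left)
    finally show ?thesis using Qs m_def by simp
  qed
  have part2: "\<forall>x\<in>{1..N+1}. \<exists>k::nat. Q'' x = real k / real m"
  proof
    fix x assume x: "x \<in> {1..N+1}"
    show "\<exists>k::nat. Q'' x = real k / real m"
    proof (cases "x \<in> {1..N}")
      case True
      have "\<lfloor>a x\<rfloor> \<ge> 0" using a3[OF True] by simp
      hence "Q'' x = real (nat \<lfloor>a x\<rfloor>) / real m" using Q''x[OF True] by simp
      thus ?thesis by blast
    next
      case False
      hence xe: "x = N + 1" using x by auto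
      define s where "s = (\<Sum>y=1..N. \<lfloor>a y\<rfloor>)"
      have ss: "of_int s \<le> real m" using sumfl suma by (simp add: s_def)
      have "Q'' x = 1 - (\<Sum>y=1..N. Q'' y)" using xe by (simp add: Q''_def rnd_def)
      also have "(\<Sum>y=1..N. Q'' y) = (\<Sum>y=1..N. of_int \<lfloor>a y\<rfloor> / real m)"
        using Q''x by (rule sum.cong[OF refl])
      also have "\<dots> = of_int s / real m" by (simp add: s_def sum_divide_distrib)
      finally have "Q'' x = (real m - of_int s) / real m" using mpos by (simp add: field_simps)
      also have "real m - of_int s = real (nat (int m - s))" using ss by simp
      finally show ?thesis by blast
    qed
  qed
  have part3: "\<forall>x\<in>{1..N}. Q'' x > 0"
  proof
    fix x assume x: "x \<in> {1..N}"
    have "\<lfloor>a x\<rfloor> \<ge> 3" using a3[OF x] by linarith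
    thus "Q'' x > 0" using Q''x[OF x] mpos by simp
  qed
  have tv1: "tv N D' Q' = tv N D Q / 2"
  proof -
    have "(\<Sum>x=1..N. \<bar>D' x - Q' x\<bar>) = (\<Sum>x=1..N. \<bar>D x - Q x\<bar> / 2)"
      by (rule sum.cong[OF refl]) (auto simp add: D'_def Q'_def mixU_def abs_if)
    thus ?thesis by (simp add: tv_def sum_divide_distrib)
  qed
  have part5: "(\<forall>x\<in>{1..N}. D x = Q x) \<longrightarrow> (\<forall>x\<in>{1..N+1}. D'' x = Q'' x)"
  proof (intro impI ballI)
    fix x assume eq: "\<forall>x\<in>{1..N}. D x = Q x" and x: "x \<in> {1..N+1}"
    have e: "\<And>y. y \<in> {1..N} \<Longrightarrow> D' y = Q' y" using eq by (simp add: D'_def Q'_def mixU_def)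
    have "(\<Sum>y=1..N. theta N Q' y * D' y) = (\<Sum>y=1..N. theta N Q' y * Q' y)"
      using e by (intro sum.cong) auto
    thus "D'' x = Q'' x" using e by (simp add: D''_def Q''_def rnd_def)
  qed
  have part6: "tv N D Q > \<epsilon> \<longrightarrow> tv (N+1) D'' Q'' \<ge> \<epsilon> / 3"
  proof
    assume h: "tv N D Q > \<epsilon>"
    have "(\<Sum>x=1..N. 2/3 * \<bar>D' x - Q' x\<bar>) \<le> (\<Sum>x=1..N. \<bar>D'' x - Q'' x\<bar>)"
    proof (rule sum_mono)
      fix x assume x: "x \<in> {1..N}"
      have "\<bar>D'' x - Q'' x\<bar> = theta N Q' x * \<bar>D' x - Q' x\<bar>"
        using x th23[OF x] by (simp add: D''_def Q''_def rnd_def abs_mult right_diff_distrib[symmetric])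
      thus "2/3 * \<bar>D' x - Q' x\<bar> \<le> \<bar>D'' x - Q'' x\<bar>"
        using th23[OF x] mult_right_mono[OF th23[OF x] abs_ge_zero[of "D' x - Q' x"]] by simp
    qed
    also have "\<dots> \<le> (\<Sum>x=1..N+1. \<bar>D'' x - Q'' x\<bar>)" by simp
    finally have "2/3 * (\<Sum>x=1..N. \<bar>D' x - Q' x\<bar>) \<le> (\<Sum>x=1..N+1. \<bar>D'' x - Q'' x\<bar>)"
      by (simp add: sum_distrib_left)
    hence "2/3 * tv N D' Q' \<le> tv (N+1) D'' Q''" by (simp add: tv_def)
    thus "tv (N+1) D'' Q'' \<ge> \<epsilon> / 3" using tv1 h by linarith
  qed
  show ?thesis using th23 part2 part3 tv1 part5 part6 by blast
qed

end
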